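(* Let $\mathbf P\in\mathbb{R}^{n\times n}$ be symmetric positive definite and $\mathbf c\in\mathbb{R}^n$, and let $\ell^*_{\mathbf c,\mathbf P}=\sup_{\beta\in\mathcal{I}_{\mathbf P}}\ell_{\mathbf c,\mathbf P}(\beta)$, with $\ell_{\mathbf c,\mathbf P}$ and $\mathcal{I}_{\mathbf P}$ as defined below. Then $$\mathcal{E}(\mathbf c,\mathbf P)\subseteq \operatorname{int}\mathcal{B}(\mathbf 0,1)\iff \ell^*_{\mathbf c,\mathbf P}>-1,$$ and $$\mathcal{E}(\mathbf c,\mathbf P)\Subset\mathcal{B}(\mathbf 0,1)\iff \ell^*_{\mathbf c,\mathbf P}=-1.$$
   Context: $\mathcal{E}(\mathbf c,\mathbf P)=\{\mathbf x\in\mathbb{R}^n:(\mathbf x-\mathbf c)^\top\mathbf P(\mathbf x-\mathbf c)\le 1\}$; $\mathcal{B}(\mathbf 0,1)=\{\mathbf x:\mathbf x^\top\mathbf x\le1\}$ and $\operatorname{int}\mathcal{B}(\mathbf 0,1)$ is the open unit ball. $\mathcal{E}\Subset\mathcal{E}_0$ means $\mathcal{E}\subseteq\mathcal{E}_0$ and $\partial\mathcal{E}\cap\partial\mathcal{E}_0\neq\emptyset$. Let $\mathbf P=\mathbf V\mathbf D\mathbf V^\top$ be a spectral decomposition with $\mathbf V$ orthogonal and $\mathbf D$ diagonal with entries $\lambda_i=D_{ii}$; let $\bar{\mathbf c}=\mathbf V^\top\mathbf c$, $S(\bar{\mathbf c})=\{i:\bar c_i\ne0\}$, and $\lambda_{\min}(\mathbf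 P)$ the smallest eigenvalue of $\mathbf P$. Set $\mathcal{I}_{\mathbf P}=(\lambda_{\min}(\mathbf P)^{-1},\infty)$ if some $i\in S(\bar{\mathbf c})$ has $\lambda_i=\lambda_{\min}(\mathbf P)$, and $\mathcal{I}_{\mathbf P}=[\lambda_{\min}(\mathbf P)^{-1},\infty)$ otherwise; and $\ell_{\mathbf c,\mathbf P}(\beta)=-\beta-\sum_{i\in S(\bar{\mathbf c})}\bar c_i^2\frac{\lambda_i\beta}{\lambda_i\beta-1}$ for $\beta\in\mathcal{I}_{\mathbf P}$. *)

theory Defs
  imports "HOL-Analysis.Analysis"
begin

definition sym_pos_def_mat :: "real^'n^'n \<Rightarrow> bool" where
  "sym_pos_def_mat P \<longleftrightarrow> transpose P = P \<and> (\<forall>x. x \<noteq> 0 \<longrightarrow> x \<bullet> (P *v x) > 0)"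

definition diagonal_mat :: "real^'n^'n \<Rightarrow> bool" where
  "diagonal_mat D \<longleftrightarrow> (\<forall>i j. i \<noteq> j \<longrightarrow> D $ i $ j = 0)"

definition ellipsoid :: "real^'n \<Rightarrow> real^'n^'n \<Rightarrow> (real^'n) set" where
  "ellipsoid c P = {x. (x - c) \<bullet> (P *v (x - c)) \<le> 1}"

definition unit_ball :: "(real^'n) set" where
  "unit_ball = {x. x \<bullet> x \<le> 1}"

definition inscribed :: "(real^'n) set \<Rightarrow> (real^'n) set \<Rightarrow> bool" where
  "inscribed E E0 \<longleftrightarrow> E \<subseteq> E0 \<and> frontier E \<inter> frontier E0 \<noteq> {}"

definition mat_eigenvalues :: "real^'n^'n \<Rightarrow> real set" where
  "mat_eigenvalues P = {l. \<exists>v. v \<noteq> 0 \<and> P *v v = l *\<^sub>R v}"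

definition lambda_min :: "real^'n^'n \<Rightarrow> real" where
  "lambda_min P = Min (mat_eigenvalues P)"

definition supp_cbar :: "real^'n^'n \<Rightarrow> real^'n \<Rightarrow> 'n set" where
  "supp_cbar V c = {i. (transpose V *v c) $ i \<noteq> 0}"

definition I_P :: "real^'n^'n \<Rightarrow> real^'n^'n \<Rightarrow> real^'n^'n \<Rightarrow> real^'n \<Rightarrow> real set" where
  "I_P P V D c = (if \<exists>i \<in> supp_cbar V c. D $ i $ i = lambda_min P
                  then {inverse (lambda_min P)<..} else {inverse (lambda_min P)..})"

definition ell :: "real^'n^'n \<Rightarrow> real^'n^'n \<Rightarrow> real^'n \<Rightarrow> real \<Rightarrow> real" where
  "ell V D c \<beta> = - \<beta> - (\<Sum>i \<in> supp_cbar V c.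
      ((transpose V *v c) $ i)^2 * (D $ i $ i * \<beta> / (D $ i $ i * \<beta> - 1)))"

definition ell_star :: "real^'n^'n \<Rightarrow> real^'n^'n \<Rightarrow> real^'n^'n \<Rightarrow> real^'n \<Rightarrow> real" where
  "ell_star P V D c = (SUP \<beta> \<in> I_P P V D c. ell V D c \<beta>)"

end

theory Submission
  imports Defs
begin


lemma comp_ident:
  fixes b l y d :: real
  assumes "l*b - 1 \<noteq> 0"
  shows "b*l*(y-d)^2 - y^2 + d^2*(l*b/(l*b-1)) = (l*b-1)*(y - b*l*d/(l*b-1))^2"
proof -
  define a where "a = l*b - 1"
  have a0: "a \<noteq> 0" using assms a_def by simp
  have e1: "a*(y - b*l*d/a) = a*y - b*l*d" using a0 by (simp add: field_simps)
  have e2: "a*(d^2*(l*b/a)) = d^2*l*b" using a0 by simp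
  have "a*(b*l*(y-d)^2 - y^2 + d^2*(l*b/a)) = a*(b*l*(y-d)^2 - y^2) + d^2*l*b"
    using e2 by (simp add: distrib_left)
  also have "\<dots> = (a*y - b*l*d)^2" unfolding a_def by (simp add: power2_eq_square algebra_simps)
  also have "\<dots> = (a*(y - b*l*d/a))^2" using e1 by simp
  also have "\<dots> = a*(a*(y - b*l*d/a)^2)" by (simp add: power2_eq_square)
  finally have "a*(b*l*(y-d)^2 - y^2 + d^2*(l*b/a)) = a*(a*(y - b*l*d/a)^2)" .
  then show ?thesis using a0 unfolding a_def by simp
qed

lemma comp_ineq:
  fixes b l y d :: real
  assumes a: "l*b - 1 \<ge> 0" and z: "l*b - 1 = 0 \<Longrightarrow> d = 0"
  shows "b*l*(y-d)^2 - y^2 \<ge> - (d^2*(l*b/(l*b-1)))"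
proof (cases "l*b-1 = 0")
  case True
  then have "d = 0" "b*l = 1" using z by (auto simp: mult.commute)
  then show ?thesis by simp
next
  case False
  have "(l*b-1)*(y - b*l*d/(l*b-1))^2 \<ge> 0" using a by simp
  then show ?thesis using comp_ident[OF False, of y d] by linarith
qed

lemma comp_eq:
  fixes b l y d :: real
  assumes a: "l*b - 1 \<ge> 0" and z: "l*b - 1 = 0 \<Longrightarrow> d = 0"
    and y: "y = b*l*d/(l*b-1) \<or> l*b - 1 = 0"
  shows "b*l*(y-d)^2 - y^2 = - (d^2*(l*b/(l*b-1)))"
proof (cases "l*b-1 = 0")
  case True
  then have "d = 0" "b*l = 1" using z by (auto simp: mult.commute)
  then show ?thesis by simp
next
  case False
  then show ?thesis using comp_ident[OF False, of y d] y by simp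
qed



lemma weak:
  fixes lam dd y :: "'n::finite \<Rightarrow> real"
  assumes pos: "\<And>i. lam i > 0" and m: "m = Min (range lam)" and S: "S = {i. dd i \<noteq> 0}"
    and I: "I = (if \<exists>i\<in>S. lam i = m then {inverse m<..} else {inverse m..})"
    and b: "\<beta> \<in> I"
  shows "\<forall>i. lam i*\<beta> - 1 \<ge> 0" "\<forall>i. lam i*\<beta> - 1 = 0 \<longrightarrow> dd i = 0" "\<beta> > 0"
proof -
  have mle: "\<And>i. m \<le> lam i" unfolding m by simp
  have mpos: "m > 0" unfolding m using pos by (simp add: Min_gr_iff)
  have bge: "\<beta> \<ge> inverse m" using b I by (auto split: if_splits)
  then show bpos: "\<beta> > 0" using mpos by (meson inverse_positive_iff_positive less_le_trans)
  have mb: "m*\<beta> \<ge> 1" using bge mpos by (simp add: field_simps)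
  have ge: "lam i*\<beta> \<ge> m*\<beta>" for i using mle[of i] bpos by (simp add: mult_right_mono)
  show "\<forall>i. lam i*\<beta> - 1 \<ge> 0" using ge mb by (meson diff_ge_0_iff_ge order_trans)
  show "\<forall>i. lam i*\<beta> - 1 = 0 \<longrightarrow> dd i = 0"
  proof (intro allI impI)
    fix i assume h: "lam i*\<beta> - 1 = 0"
    show "dd i = 0"
    proof (rule ccontr)
      assume d: "dd i \<noteq> 0"
      have "lam i = m"
      proof (rule ccontr)
        assume "lam i \<noteq> m"
        then have "lam i > m" using mle[of i] by simp
        then have "lam i*\<beta> > m*\<beta>" using bpos by simp
        then show False using h mb by simp
      qed
      then have "\<exists>i\<in>S. lam i = m" using d S by auto
      then have "\<beta> > inverse m" using b I by simp
      then have "m*\<beta> > 1" using mpos by (simp add: field_simps)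
      then show False using h \<open>lam i = m\<close> by simp
    qed
  qed
qed

lemma weak_sum:
  fixes lam dd y :: "'n::finite \<Rightarrow> real"
  assumes a: "\<forall>i. lam i*\<beta> - 1 \<ge> 0" and z: "\<forall>i. lam i*\<beta> - 1 = 0 \<longrightarrow> dd i = 0"
    and bpos: "\<beta> > 0" and S: "S = {i. dd i \<noteq> 0}"
    and q: "(\<Sum>i\<in>UNIV. lam i*(y i - dd i)^2) \<le> 1"
  shows "(\<Sum>i\<in>UNIV. (y i)^2) \<le> \<beta> + (\<Sum>i\<in>S. (dd i)^2 * (lam i*\<beta>/(lam i*\<beta>-1)))"
proof -
  have c: "\<beta>*lam i*(y i - dd i)^2 - (y i)^2 \<ge> - ((dd i)^2*(lam i*\<beta>/(lam i*\<beta>-1)))" for i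
    using comp_ineq[of "lam i" \<beta> "dd i" "y i"] a z by auto
  have "(\<Sum>i\<in>UNIV. \<beta>*lam i*(y i - dd i)^2 - (y i)^2) \<ge> (\<Sum>i\<in>UNIV. - ((dd i)^2*(lam i*\<beta>/(lam i*\<beta>-1))))"
    by (rule sum_mono) (use c in auto)
  moreover have "(\<Sum>i\<in>UNIV. (dd i)^2*(lam i*\<beta>/(lam i*\<beta>-1))) = (\<Sum>i\<in>S. (dd i)^2 * (lam i*\<beta>/(lam i*\<beta>-1)))"
    by (rule sum.mono_neutral_right) (auto simp: S)
  moreover have "(\<Sum>i\<in>UNIV. \<beta>*lam i*(y i - dd i)^2 - (y i)^2) = \<beta>*(\<Sum>i\<in>UNIV. lam i*(y i - dd i)^2) - (\<Sum>i\<in>UNIV. (y i)^2)"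
    by (simp add: sum_subtractf sum_distrib_left mult.assoc)
  moreover have "\<beta>*(\<Sum>i\<in>UNIV. lam i*(y i - dd i)^2) \<le> \<beta>" using q bpos by simp
  ultimately show ?thesis by (simp add: sum_negf)
qed

lemma eq_sum:
  fixes lam dd y :: "'n::finite \<Rightarrow> real"
  assumes a: "\<forall>i. lam i*\<beta> - 1 \<ge> 0" and z: "\<forall>i. lam i*\<beta> - 1 = 0 \<longrightarrow> dd i = 0"
    and S: "S = {i. dd i \<noteq> 0}"
    and q: "(\<Sum>i\<in>UNIV. lam i*(y i - dd i)^2) = 1"
    and y: "\<forall>i. y i = \<beta>*lam i*dd i/(lam i*\<beta>-1) \<or> lam i*\<beta> - 1 = 0"
  shows "(\<Sum>i\<in>UNIV. (y i)^2) = \<beta> + (\<Sum>i\<in>S. (dd i)^2 * (lam i*\<beta>/(lam i*\<beta>-1)))"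
proof -
  have c: "\<beta>*lam i*(y i - dd i)^2 - (y i)^2 = - ((dd i)^2*(lam i*\<beta>/(lam i*\<beta>-1)))" for i
    using comp_eq[of "lam i" \<beta> "dd i" "y i"] a z y by auto
  have "(\<Sum>i\<in>UNIV. \<beta>*lam i*(y i - dd i)^2 - (y i)^2) = (\<Sum>i\<in>UNIV. - ((dd i)^2*(lam i*\<beta>/(lam i*\<beta>-1))))"
    by (rule sum.cong) (use c in auto)
  moreover have "(\<Sum>i\<in>UNIV. (dd i)^2*(lam i*\<beta>/(lam i*\<beta>-1))) = (\<Sum>i\<in>S. (dd i)^2 * (lam i*\<beta>/(lam i*\<beta>-1)))"
    by (rule sum.mono_neutral_right) (auto simp: S)
  moreover have "(\<Sum>i\<in>UNIV. \<beta>*lam i*(y i - dd i)^2 - (y i)^2) = \<beta>*(\<Sum>i\<in>UNIV. lam i*(y i - dd i)^2) - (\<Sum>i\<in>UNIV. (y i)^2)"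
    by (simp add: sum_subtractf sum_distrib_left mult.assoc)
  ultimately show ?thesis using q by (simp add: sum_negf)
qed



lemma strong:
  fixes lam dd :: "'n::finite \<Rightarrow> real"
  assumes pos: "\<And>i. lam i > 0" and m: "m = Min (range lam)" and S: "S = {i. dd i \<noteq> 0}"
    and I: "I = (if \<exists>i\<in>S. lam i = m then {inverse m<..} else {inverse m..})"
  shows "\<exists>\<beta>\<in>I. \<exists>y. (\<Sum>i\<in>UNIV. lam i*(y i - dd i)^2) = 1 \<and>
           (\<forall>i. y i = \<beta>*lam i*dd i/(lam i*\<beta>-1) \<or> lam i*\<beta> - 1 = 0)"
proof -
  define g where "g = (\<lambda>\<beta>. \<Sum>i\<in>S. lam i * (dd i)^2/(lam i*\<beta> - 1)^2)"
  define hat where "hat = (\<lambda>\<beta> i. \<beta>*lam i*dd i/(lam i*\<beta>-1))"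
  have mle: "\<And>i. m \<le> lam i" unfolding m by simp
  have mpos: "m > 0" unfolding m using pos by (simp add: Min_gr_iff)
  have "Min (range lam) \<in> range lam" by (rule Min_in) auto
  then obtain j where "Min (range lam) = lam j" by (metis imageE)
  then have j: "lam j = m" unfolding m by simp
  have Q: "(\<Sum>i\<in>UNIV. lam i*(hat \<beta> i - dd i)^2) = g \<beta>" if nz: "\<forall>i\<in>S. lam i*\<beta> - 1 \<noteq> 0" for \<beta>
  proof -
    have t: "lam i*(hat \<beta> i - dd i)^2 = lam i * (dd i)^2/(lam i*\<beta> - 1)^2" if "i \<in> S" for i
    proof -
      have a: "lam i*\<beta> - 1 \<noteq> 0" using nz that by auto
      have "hat \<beta> i - dd i = dd i/(lam i*\<beta> - 1)" unfolding hat_def using a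
        by (simp add: field_simps)
      then show ?thesis by (simp add: power_divide)
    qed
    have "(\<Sum>i\<in>UNIV. lam i*(hat \<beta> i - dd i)^2) = (\<Sum>i\<in>S. lam i*(hat \<beta> i - dd i)^2)"
      by (rule sum.mono_neutral_right) (auto simp: S hat_def)
    also have "\<dots> = g \<beta>" unfolding g_def by (rule sum.cong) (use t in auto)
    finally show ?thesis .
  qed
  define K where "K = 1 + (\<Sum>i\<in>S. lam i * (dd i)^2)"
  have K1: "K \<ge> 1" unfolding K_def by (simp add: sum_nonneg pos less_imp_le)
  define bb where "bb = (1+K)/m"
  have mbb: "m*bb - 1 = K" unfolding bb_def using mpos by simp
  have gbb: "g bb \<le> 1"
  proof -
    have t: "lam i * (dd i)^2/(lam i*bb - 1)^2 \<le> lam i * (dd i)^2 / K" for i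
    proof -
      have "lam i * bb \<ge> m * bb" using mle[of i] mpos K1 unfolding bb_def
        by (intro mult_right_mono) auto
      then have x: "lam i*bb - 1 \<ge> K" using mbb by simp
      then have "(lam i*bb-1)*(lam i*bb-1) \<ge> 1*(lam i*bb-1)" using K1 by (intro mult_right_mono) auto
      then have "(lam i*bb - 1)^2 \<ge> K" using x by (simp add: power2_eq_square)
      then show ?thesis using K1 pos[of i]
        by (intro divide_left_mono) (auto intro!: mult_pos_pos)
    qed
    have "g bb \<le> (\<Sum>i\<in>S. lam i * (dd i)^2 / K)" unfolding g_def by (rule sum_mono) (use t in auto)
    also have "\<dots> = (\<Sum>i\<in>S. lam i * (dd i)^2) / K" by (simp add: sum_divide_distrib)
    also have "\<dots> \<le> 1" using K1 unfolding K_def by simp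
    finally show ?thesis .
  qed
  have cont: "continuous_on {a..bb} g" if nz: "\<forall>\<beta>\<in>{a..bb}. \<forall>i\<in>S. lam i*\<beta> - 1 \<noteq> 0" for a
    unfolding g_def using nz by (intro continuous_intros) auto
  show ?thesis
  proof (cases "\<exists>i\<in>S. lam i = m")
    case True
    then obtain i0 where i0: "i0 \<in> S" "lam i0 = m" by auto
    have IT: "I = {inverse m<..}" using I True by simp
    define \<epsilon> where "\<epsilon> = min 1 (sqrt m * \<bar>dd i0\<bar>)"
    have e0: "\<epsilon> > 0" using i0 S mpos unfolding \<epsilon>_def by auto
    have e1: "\<epsilon> \<le> 1" unfolding \<epsilon>_def by simp
    have e2: "\<epsilon>^2 \<le> m * (dd i0)^2"
    proof -
      have "\<epsilon> \<le> sqrt m * \<bar>dd i0\<bar>" unfolding \<epsilon>_def by simp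
      then have "\<epsilon>^2 \<le> (sqrt m * \<bar>dd i0\<bar>)^2" using e0 by (intro power_mono) auto
      also have "\<dots> = m * (dd i0)^2" using mpos by (simp add: power_mult_distrib)
      finally show ?thesis .
    qed
    define a where "a = (1+\<epsilon>)/m"
    have ma: "m*a - 1 = \<epsilon>" unfolding a_def using mpos by simp
    have abb: "a \<le> bb" unfolding a_def bb_def using e1 K1 mpos by (simp add: divide_right_mono)
    have apos: "a > 0" unfolding a_def using e0 mpos by simp
    have nz: "\<forall>\<beta>\<in>{a..bb}. \<forall>i. lam i*\<beta> - 1 > 0"
    proof (intro ballI allI)
      fix \<beta> i assume "\<beta> \<in> {a..bb}"
      then have "\<beta> \<ge> a" by simp
      then have "lam i*\<beta> \<ge> m*a" using mle[of i] apos mpos by (intro mult_mono) auto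
      then show "lam i*\<beta> - 1 > 0" using ma e0 by simp
    qed
    have ga: "g a \<ge> 1"
    proof -
      have "1 \<le> lam i0 * (dd i0)^2/(lam i0*a - 1)^2"
        using i0 ma e0 e2 by simp
      also have "\<dots> \<le> g a" unfolding g_def
      proof (rule member_le_sum)
        fix x
        have "0 \<le> lam x * (dd x)^2" using pos[of x] by simp
        then show "0 \<le> lam x * (dd x)^2/(lam x*a - 1)^2" by simp
      qed (use i0 in auto)
      finally show ?thesis .
    qed
    obtain \<beta> where b: "a \<le> \<beta>" "\<beta> \<le> bb" "g \<beta> = 1"
      using IVT2'[of g bb 1 a] gbb ga abb cont[of a] nz by (smt (verit) atLeastAtMost_iff)
    have bI: "\<beta> \<in> I"
    proof -
      have "m*\<beta> \<ge> m*a" using b(1) mpos by simp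
      then have "m*\<beta> > 1" using ma e0 by simp
      then have "\<beta> > inverse m" using mpos by (simp add: field_simps)
      then show ?thesis unfolding IT by simp
    qed
    have nzb: "\<forall>i. lam i*\<beta> - 1 > 0" using nz b by auto
    have nz': "\<forall>i\<in>S. lam i*\<beta> - 1 \<noteq> 0" using nzb by (metis less_irrefl)
    have q: "(\<Sum>i\<in>UNIV. lam i*(hat \<beta> i - dd i)^2) = 1" using Q[OF nz'] b(3) by simp
    show ?thesis
      by (rule bexI[OF _ bI], rule exI[of _ "hat \<beta>"]) (use q in \<open>auto simp: hat_def\<close>)
  next
    case False
    have IT: "I = {inverse m..}" using I False by simp
    have gt: "lam i > m" if "i \<in> S" for i using False that mle[of i] by force
    have nz: "\<forall>\<beta>\<ge>inverse m. \<forall>i\<in>S. lam i*\<beta> - 1 > 0"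
    proof (intro allI impI ballI)
      fix \<beta> i assume b: "\<beta> \<ge> inverse m" and i: "i \<in> S"
      have "lam i*\<beta> > m*\<beta>" using gt[OF i] b mpos
        by (intro mult_strict_right_mono) (auto intro: less_le_trans[OF positive_imp_inverse_positive])
      moreover have "m*\<beta> \<ge> 1" using b mpos by (simp add: field_simps)
      ultimately show "lam i*\<beta> - 1 > 0" by simp
    qed
    have ibb: "inverse m \<le> bb" unfolding bb_def using K1 mpos by (simp add: field_simps)
    show ?thesis
    proof (cases "g (inverse m) \<ge> 1")
      case True
      obtain \<beta> where b: "inverse m \<le> \<beta>" "\<beta> \<le> bb" "g \<beta> = 1"
        using IVT2'[of g bb 1 "inverse m"] gbb True ibb cont[of "inverse m"] nz by (smt (verit) atLeastAtMost_iff)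
      have bI: "\<beta> \<in> I" unfolding IT using b by simp
      have nz': "\<forall>i\<in>S. lam i*\<beta> - 1 \<noteq> 0" using nz b(1) by (metis less_irrefl)
      have q: "(\<Sum>i\<in>UNIV. lam i*(hat \<beta> i - dd i)^2) = 1" using Q[OF nz'] b(3) by simp
      show ?thesis
        by (rule bexI[OF _ bI], rule exI[of _ "hat \<beta>"]) (use q in \<open>auto simp: hat_def\<close>)
    next
      case gl: False
      define \<beta> where "\<beta> = inverse m"
      have bI: "\<beta> \<in> I" unfolding IT \<beta>_def by simp
      have jS: "j \<notin> S" using False j by auto
      then have dj: "dd j = 0" using S by auto
      define t where "t = sqrt ((1 - g \<beta>)/m)"
      have mt: "lam j * t^2 = 1 - g \<beta>" unfolding t_def j using gl mpos \<beta>_def by simp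
      define y where "y = (hat \<beta>)(j := t)"
      have hj: "hat \<beta> j = 0" unfolding hat_def using dj by simp
      have "(\<Sum>i\<in>UNIV. lam i*(y i - dd i)^2)
          = (\<Sum>i\<in>UNIV. lam i*(hat \<beta> i - dd i)^2 + (if i = j then lam j * t^2 else 0))"
        by (rule sum.cong) (auto simp: y_def hj dj)
      also have "\<dots> = g \<beta> + lam j * t^2"
      proof -
        have nz': "\<forall>i\<in>S. lam i*\<beta> - 1 \<noteq> 0" using nz \<beta>_def by (metis less_irrefl order_refl)
        show ?thesis using Q[OF nz'] by (simp add: sum.distrib)
      qed
      also have "\<dots> = 1" using mt by simp
      finally have q: "(\<Sum>i\<in>UNIV. lam i*(y i - dd i)^2) = 1" .
      have "\<forall>i. y i = \<beta>*lam i*dd i/(lam i*\<beta>-1) \<or> lam i*\<beta> - 1 = 0"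
        using j mpos by (auto simp: y_def hat_def \<beta>_def)
      then show ?thesis using q bI by blast
    qed
  qed
qed



lemma mv_scaleR: "(A::real^'n^'m) *v (s *\<^sub>R x) = s *\<^sub>R (A *v x)"
  by (simp add: vec_eq_iff matrix_vector_mult_def sum_distrib_left mult_ac)

lemma diag_mv:
  assumes "diagonal_mat (D::real^'n^'n)"
  shows "(D *v w) $ i = D$i$i * w$i"
proof -
  have "(D *v w) $ i = (\<Sum>j\<in>UNIV. D$i$j * w$j)" by (simp add: matrix_vector_mult_def)
  also have "\<dots> = (\<Sum>j\<in>UNIV. if j = i then D$i$i * w$i else 0)"
    by (rule sum.cong) (use assms in \<open>auto simp: diagonal_mat_def\<close>)
  also have "\<dots> = D$i$i * w$i" by simp
  finally show ?thesis .
qed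

lemma inner_mv: "(z::real^'n) \<bullet> ((V::real^'n^'n) *v u) = (transpose V *v z) \<bullet> u"
  by (metis dot_lmul_matrix transpose_matrix_vector)

lemma quad:
  fixes P V D :: "real^'n^'n"
  assumes "diagonal_mat D" "P = V ** D ** transpose V"
  shows "z \<bullet> (P *v z) = (\<Sum>i\<in>UNIV. D$i$i * ((transpose V *v z)$i)^2)"
proof -
  have "P *v z = V *v (D *v (transpose V *v z))"
    using assms(2) by (simp only: matrix_vector_mul_assoc matrix_mul_assoc)
  then have "z \<bullet> (P *v z) = (transpose V *v z) \<bullet> (D *v (transpose V *v z))"
    by (simp only: inner_mv)
  also have "\<dots> = (\<Sum>i\<in>UNIV. D$i$i * ((transpose V *v z)$i)^2)"
    unfolding inner_vec_def using diag_mv[OF assms(1)]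
    by (simp add: power2_eq_square mult_ac)
  finally show ?thesis .
qed

lemma VtV:
  assumes "orthogonal_matrix (V::real^'n^'n)"
  shows "transpose V *v (V *v y) = y" "V *v (transpose V *v y) = y"
  using assms unfolding orthogonal_matrix_def
  by (simp_all only: matrix_vector_mul_assoc matrix_vector_mul_lid)

lemma normsq:
  assumes "orthogonal_matrix (V::real^'n^'n)"
  shows "x \<bullet> x = (\<Sum>i\<in>UNIV. ((transpose V *v x)$i)^2)"
proof -
  have "x \<bullet> x = x \<bullet> (V *v (transpose V *v x))" using VtV[OF assms] by simp
  also have "\<dots> = (transpose V *v x) \<bullet> (transpose V *v x)" by (simp only: inner_mv)
  finally show ?thesis by (simp add: inner_vec_def power2_eq_square)
qed

lemma eigen:
  fixes P V D :: "real^'n^'n"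
  assumes o: "orthogonal_matrix V" and d: "diagonal_mat D" and p: "P = V ** D ** transpose V"
  shows "mat_eigenvalues P = range (\<lambda>i. D$i$i)"
proof
  have Pv: "P *v v = V *v (D *v (transpose V *v v))" for v
    using p by (simp only: matrix_vector_mul_assoc matrix_mul_assoc)
  show "mat_eigenvalues P \<subseteq> range (\<lambda>i. D$i$i)"
  proof
    fix l assume "l \<in> mat_eigenvalues P"
    then obtain v where v: "v \<noteq> 0" "P *v v = l *\<^sub>R v" unfolding mat_eigenvalues_def by auto
    define w where "w = transpose V *v v"
    have "w \<noteq> 0" using v VtV[OF o, of v] unfolding w_def by force
    then obtain i where i: "w$i \<noteq> 0" by (auto simp: vec_eq_iff)
    have e1: "transpose V *v (P *v v) = D *v w" unfolding Pv w_def using VtV[OF o] by simp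
    have e2: "transpose V *v (P *v v) = l *\<^sub>R w" unfolding v(2) w_def by (rule mv_scaleR)
    have "(D *v w)$i = l * w$i" unfolding e1[symmetric] e2 by simp
    then have "D$i$i * w$i = l * w$i" using diag_mv[OF d] by simp
    then have "l = D$i$i" using i by simp
    then show "l \<in> range (\<lambda>i. D$i$i)" by simp
  qed
  show "range (\<lambda>i. D$i$i) \<subseteq> mat_eigenvalues P"
  proof
    fix l assume "l \<in> range (\<lambda>i. D$i$i)"
    then obtain i where l: "l = D$i$i" by auto
    define v where "v = V *v axis i 1"
    have tv: "transpose V *v v = axis i 1" unfolding v_def using VtV[OF o] by simp
    have "v \<noteq> 0" 
    proof
      assume "v = 0"
      then have "transpose V *v v = 0" by simp
      then show False using tv by simp
    qed
    moreover have "D *v axis i 1 = l *\<^sub>R axis i 1"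
      by (simp add: vec_eq_iff diag_mv[OF d] l axis_def)
    then have "P *v v = l *\<^sub>R v" unfolding Pv tv by (simp only: mv_scaleR v_def)
    ultimately show "l \<in> mat_eigenvalues P" unfolding mat_eigenvalues_def by blast
  qed
qed



theorem theorem1:
  fixes P V D :: "real^'n^'n" and c :: "real^'n"
  assumes "sym_pos_def_mat P"
    and "orthogonal_matrix V" and "diagonal_mat D" and "P = V ** D ** transpose V"
  shows "(ellipsoid c P \<subseteq> interior unit_ball \<longleftrightarrow> ell_star P V D c > -1)
       \<and> (inscribed (ellipsoid c P) unit_ball \<longleftrightarrow> ell_star P V D c = -1)"
proof -
  note spd = assms(1) and o = assms(2) and d = assms(3) and p = assms(4)
  define lam where "lam = (\<lambda>i. D$i$i)"
  define dd where "dd = (\<lambda>i. (transpose V *v c)$i)"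
  define m where "m = Min (range lam)"
  define S where "S = {i. dd i \<noteq> 0}"
  define I where "I = (if \<exists>i\<in>S. lam i = m then {inverse m<..} else {inverse m..})"
  define L where "L = ell V D c"
  define q where "q = (\<lambda>x. (x - c) \<bullet> (P *v (x - c)))"
  have qform: "q x = (\<Sum>i\<in>UNIV. lam i * ((transpose V *v x)$i - dd i)^2)" for x
    unfolding q_def quad[OF d p] lam_def dd_def by (simp add: matrix_vector_mult_diff_distrib)
  have nsq: "x \<bullet> x = (\<Sum>i\<in>UNIV. ((transpose V *v x)$i)^2)" for x by (rule normsq[OF o])
  have Eq: "ellipsoid c P = {x. q x \<le> 1}" unfolding ellipsoid_def q_def by simp
  have pos: "lam i > 0" for i
  proof -
    define v where "v = V *v axis i 1"
    have tv: "transpose V *v v = axis i 1" unfolding v_def using VtV[OF o] by simp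
    have "v \<noteq> 0" 
    proof
      assume "v = 0"
      then have "transpose V *v v = 0" by simp
      then show False using tv by simp
    qed
    then have "v \<bullet> (P *v v) > 0" using spd unfolding sym_pos_def_mat_def by blast
    also have "v \<bullet> (P *v v) = (\<Sum>k\<in>UNIV. if k = i then lam i else 0)"
      unfolding quad[OF d p] tv lam_def by (rule sum.cong) (auto simp: axis_def)
    finally show ?thesis by simp
  qed
  have lm: "lambda_min P = m" unfolding lambda_min_def eigen[OF o d p] m_def lam_def ..
  have IP: "I_P P V D c = I" unfolding I_P_def I_def lm supp_cbar_def S_def dd_def lam_def ..
  have Ldef: "L \<beta> = - \<beta> - (\<Sum>i\<in>S. (dd i)^2 * (lam i*\<beta>/(lam i*\<beta>-1)))" for \<beta>
    unfolding L_def ell_def supp_cbar_def S_def dd_def lam_def ..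
  have es: "ell_star P V D c = (SUP \<beta>\<in>I. L \<beta>)" unfolding ell_star_def IP L_def ..
  have W: "(\<Sum>i\<in>UNIV. (y i)^2) \<le> - L \<beta>" if b: "\<beta> \<in> I" and qy: "(\<Sum>i\<in>UNIV. lam i*(y i - dd i)^2) \<le> 1" for \<beta> y
  proof -
    note w = weak[OF pos m_def S_def I_def b]
    show ?thesis using weak_sum[OF w S_def qy] unfolding Ldef by simp
  qed
  obtain \<beta>0 y0 where b0: "\<beta>0 \<in> I" and q0: "(\<Sum>i\<in>UNIV. lam i*(y0 i - dd i)^2) = 1"
    and y0: "\<forall>i. y0 i = \<beta>0*lam i*dd i/(lam i*\<beta>0-1) \<or> lam i*\<beta>0 - 1 = 0"
    using strong[OF pos m_def S_def I_def] by blast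
  define r where "r = (\<Sum>i\<in>UNIV. (y0 i)^2)"
  have r: "r = - L \<beta>0"
  proof -
    note w = weak[OF pos m_def S_def I_def b0]
    show ?thesis using eq_sum[OF w(1,2) S_def q0 y0] unfolding Ldef r_def by simp
  qed
  have star: "ell_star P V D c = - r"
  proof -
    have "Sup (L ` I) = L \<beta>0"
    proof (rule cSup_eq_maximum)
      show "L \<beta>0 \<in> L ` I" using b0 by simp
      fix x assume "x \<in> L ` I"
      then obtain \<beta> where "\<beta> \<in> I" "x = L \<beta>" by auto
      then show "x \<le> L \<beta>0" using W[of \<beta> y0] q0 r r_def by simp
    qed
    then show ?thesis unfolding es r by simp
  qed
  have bound: "x \<bullet> x \<le> r" if "x \<in> ellipsoid c P" for x
    using that W[OF b0, of "\<lambda>i. (transpose V *v x)$i"] unfolding Eq qform nsq r by simp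
  define x0 where "x0 = V *v (\<chi> i. y0 i)"
  have tx0: "transpose V *v x0 = (\<chi> i. y0 i)" unfolding x0_def using VtV[OF o] by simp
  have qx0: "q x0 = 1" unfolding qform tx0 using q0 by simp
  have x0E: "x0 \<in> ellipsoid c P" unfolding Eq using qx0 by simp
  have x0n: "x0 \<bullet> x0 = r" unfolding nsq tx0 r_def by simp
  have ub: "unit_ball = cball (0::real^'n) 1"
    unfolding unit_ball_def cball_def dist_norm by (auto simp: norm_eq_sqrt_inner)
  have iub: "interior unit_ball = {x::real^'n. x \<bullet> x < 1}"
    unfolding ub interior_cball ball_def dist_norm by (auto simp: norm_eq_sqrt_inner)
  have fub: "frontier unit_ball = {x::real^'n. x \<bullet> x = 1}"
    unfolding ub frontier_cball sphere_def dist_norm by (auto simp: norm_eq_sqrt_inner)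
  have A: "ellipsoid c P \<subseteq> interior unit_ball \<longleftrightarrow> r < 1"
  proof
    assume "ellipsoid c P \<subseteq> interior unit_ball"
    then show "r < 1" using x0E x0n iub by auto
  next
    assume "r < 1"
    show "ellipsoid c P \<subseteq> interior unit_ball"
    proof
      fix x assume "x \<in> ellipsoid c P"
      then have "x \<bullet> x < 1" using bound[of x] \<open>r < 1\<close> by linarith
      then show "x \<in> interior unit_ball" unfolding iub by simp
    qed
  qed
  have B: "inscribed (ellipsoid c P) unit_ball \<longleftrightarrow> r = 1"
  proof
    assume h: "inscribed (ellipsoid c P) unit_ball"
    then have "r \<le> 1" using x0E x0n unfolding inscribed_def unit_ball_def by auto
    obtain z where z: "z \<in> frontier (ellipsoid c P)" "z \<in> frontier unit_ball"
      using h unfolding inscribed_def by auto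
    have "ellipsoid c P \<subseteq> cball 0 (sqrt r)"
      using bound by (auto simp: dist_norm norm_eq_sqrt_inner)
    then have "closure (ellipsoid c P) \<subseteq> cball 0 (sqrt r)"
      by (rule closure_minimal) simp
    then have "sqrt (z \<bullet> z) \<le> sqrt r" using z(1) unfolding frontier_def
      by (auto simp: dist_norm norm_eq_sqrt_inner)
    then have "1 \<le> r" using z(2) fub by simp
    then show "r = 1" using \<open>r \<le> 1\<close> by simp
  next
    assume r1: "r = 1"
    have sub: "ellipsoid c P \<subseteq> unit_ball" using bound r1 unfolding unit_ball_def by auto
    have "x0 \<notin> interior (ellipsoid c P)"
    proof
      assume "x0 \<in> interior (ellipsoid c P)"
      then obtain e where e: "e > 0" "ball x0 e \<subseteq> ellipsoid c P" unfolding mem_interior by auto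
      define w where "w = x0 - c"
      have "w \<noteq> 0" using qx0 unfolding q_def w_def by auto
      then have nw: "norm w > 0" by simp
      define t where "t = e / (2 * norm w)"
      have t0: "t > 0" unfolding t_def using e nw by simp
      define pp where "pp = x0 + t *\<^sub>R w"
      have "dist x0 pp = t * norm w" unfolding pp_def dist_norm using t0 by simp
      also have "\<dots> = e/2" unfolding t_def using nw by simp
      finally have "pp \<in> ball x0 e" using e by simp
      then have "q pp \<le> 1" using e Eq by auto
      moreover have "q pp = (1+t)^2 * q x0"
      proof -
        have "pp - c = (1+t) *\<^sub>R w" unfolding pp_def w_def by (simp add: algebra_simps)
        then show ?thesis unfolding q_def w_def
          by (simp add: mv_scaleR power2_eq_square)
      qed
      moreover have "(1+t)^2 > (1::real)"
      proof -
        have "(1+t)^2 = 1 + (2*t + t^2)" by (simp add: power2_eq_square algebra_simps)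
        moreover have "t^2 \<ge> 0" by simp
        ultimately show ?thesis using t0 by linarith
      qed
      ultimately show False using qx0 by simp
    qed
    then have "x0 \<in> frontier (ellipsoid c P)"
      unfolding frontier_def using x0E closure_subset by auto
    moreover have "x0 \<in> frontier unit_ball" using fub x0n r1 by simp
    ultimately show "inscribed (ellipsoid c P) unit_ball" unfolding inscribed_def using sub by auto
  qed
  show ?thesis using A B star by auto
qed

end
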